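(* There is an absolute constant $c>0$ such that the following holds. Let $a$ be a symmetric, sub-gaussian random variable with $\mathbb{E}a^2=1$, let $\mathbf{a}$ be a random vector in $\mathbb{R}^n$ with i.i.d. coordinates distributed as $a$, let $\mathbf{x}\in S^{n-1}$, and define $\mathbf{v}_{\mathbf{x}}=\mathbb{E}\,\mathrm{sign}(\langle\mathbf{a},\mathbf{x}\rangle)\mathbf{a}$. If $\|\mathbf{x}\|_\infty\le c/\mathbb{E}|a|^3$, then $\frac12\le\|\mathbf{v}_{\mathbf{x}}\|_2\le1$.
   Context: $\mathrm{sign}(t)=1$ if $t\ge0$ and $-1$ otherwise. $S^{n-1}$ is the Euclidean unit sphere in $\mathbb{R}^n$. *)

theory Defs
  imports "HOL-Probability.Probability"
begin

definition sign0 :: "real \<Rightarrow> real" where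
  "sign0 t = (if t \<ge> 0 then 1 else -1)"

text \<open>A real random variable, given by its distribution D (a probability measure on the
  Borel sets of the reals), is sub-gaussian if E exp(a^2/K^2) <= 2 for some K > 0.\<close>
definition subgaussian :: "real measure \<Rightarrow> bool" where
  "subgaussian D \<longleftrightarrow> (\<exists>K>0. integrable D (\<lambda>t. exp (t\<^sup>2 / K\<^sup>2)) \<and>
                              (\<integral>t. exp (t\<^sup>2 / K\<^sup>2) \<partial>D) \<le> 2)"

definition symmetric_distr :: "real measure \<Rightarrow> bool" where
  "symmetric_distr D \<longleftrightarrow> distr D borel uminus = D"

end

theory Submission
  imports Defs
begin

lemma sign0_measurable[measurable]: "sign0 \<in> borel_measurable borel"
  unfolding sign0_def by measurable

lemma pw1: "(6/7)*t^2 - (32/343)*t^4 \<le> \<bar>t::real\<bar>"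
proof -
  define a where "a = \<bar>t\<bar>"
  have a0: "a \<ge> 0" by (simp add: a_def)
  have "0 \<le> a*(4*a-7)^2*(2*a+7)" using a0 by simp
  also have "a*(4*a-7)^2*(2*a+7) = 343*a - 294*a^2 + 32*a^4"
    by (simp add: power2_eq_square power4_eq_xxxx algebra_simps)
  finally have "0 \<le> 343*a - 294*a^2 + 32*a^4" .
  moreover have "t^2 = a^2" "t^4 = a^4" by (simp_all add: a_def power_even_abs)
  ultimately show ?thesis unfolding a_def[symmetric] by simp
qed

lemma pw2: "\<bar>r::real\<bar> \<le> 20*r^2 + 1/80"
proof -
  have "0 \<le> 20*(\<bar>r\<bar> - 1/40)^2" by simp
  also have "20*(\<bar>r\<bar> - 1/40)^2 = 20*r^2 - \<bar>r\<bar> + 1/80"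
    by (simp add: power2_diff power2_abs algebra_simps power2_eq_square)
  finally show ?thesis by simp
qed

lemma pw3: "(6/7)*t^2 - (32/343)*t^4 - 20*r^2 - 1/80 \<le> \<bar>t + r::real\<bar>"
  using pw1[of t] pw2[of r] by linarith

lemma pw4: "\<bar>t::real\<bar> \<le> 1 + t^2"
proof -
  have "0 \<le> (\<bar>t\<bar> - 1)\<^sup>2" by simp
  also have "(\<bar>t\<bar> - 1)\<^sup>2 = t\<^sup>2 - 2 * \<bar>t\<bar> + 1" by (simp add: power2_diff)
  finally show ?thesis by linarith
qed

lemma amgm: "(L::real) > 0 \<Longrightarrow> a*b \<le> a^2/(2*L) + L*b^2/2"
proof -
  assume L: "L > 0"
  have "0 \<le> (a - L*b)^2" by simp
  then have "2*L*(a*b) \<le> a^2 + L^2*b^2" by (simp add: power2_diff power_mult_distrib algebra_simps)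
  then have "a*b \<le> (a^2 + L^2*b^2) / (2*L)" using L by (simp add: field_simps)
  also have "\<dots> = a^2/(2*L) + L*b^2/2" using L by (simp add: field_simps power2_eq_square)
  finally show ?thesis .
qed

lemma sign0_abs: "\<bar>sign0 s\<bar> = 1" "sign0 s * s = \<bar>s\<bar>" "sign0 s * z \<le> \<bar>z\<bar>"
  by (auto simp: sign0_def)

locale setD =
  fixes D :: "real measure"
  assumes PD: "prob_space D" and sD: "sets D = sets borel"
begin

lemma meas_D[measurable (raw)]: "g \<in> borel_measurable borel \<Longrightarrow> g \<in> borel_measurable D"
  using measurable_cong_sets[OF sD refl, of borel] by metis

interpretation D: prob_space D by (rule PD)

lemma PPi: "prob_space (PiM I (\<lambda>_. D))"
  by (rule prob_space_PiM) (simp add: PD)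

interpretation ps: product_sigma_finite "\<lambda>_. D"
  unfolding product_sigma_finite_def using PD prob_space_imp_sigma_finite by blast

lemma coord1:
  fixes g :: "real \<Rightarrow> real"
  assumes "finite I" "i \<in> I" "integrable D g"
  shows "integrable (PiM I (\<lambda>_. D)) (\<lambda>\<omega>. g (\<omega> i))"
    "(\<integral>\<omega>. g (\<omega> i) \<partial>PiM I (\<lambda>_. D)) = (\<integral>t. g t \<partial>D)"
proof -
  define F where "F = (\<lambda>m t. if m = i then g t else (1::real))"
  have [simp]: "integrable D (\<lambda>t. 1::real)" by simp
  have [simp]: "integrable D (\<lambda>t. g t)" using assms by simp
  have intF0: "integrable D (F m)" for m
    using assms by (cases "m = i") (simp_all add: F_def)
  have intF: "\<And>m. m \<in> I \<Longrightarrow> integrable D (F m)" using intF0 by blast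
  have eq: "\<And>\<omega>. (\<Prod>m\<in>I. F m (\<omega> m)) = g (\<omega> i)"
    using assms by (simp add: F_def if_distrib prod.delta)
  show "integrable (PiM I (\<lambda>_. D)) (\<lambda>\<omega>. g (\<omega> i))"
    using ps.product_integrable_prod[where f=F, OF assms(1) intF] by (simp add: eq)
  have "(\<integral>\<omega>. (\<Prod>m\<in>I. F m (\<omega> m)) \<partial>PiM I (\<lambda>_. D)) = (\<Prod>m\<in>I. integral\<^sup>L D (F m))"
    by (rule ps.product_integral_prod[where f=F, OF assms(1) intF])
  also have "\<dots> = integral\<^sup>L D (F i) * (\<Prod>m\<in>I-{i}. integral\<^sup>L D (F m))"
    using assms by (simp add: prod.remove)
  also have "(\<Prod>m\<in>I-{i}. integral\<^sup>L D (F m)) = 1"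
    by (intro prod.neutral) (simp add: F_def D.prob_space)
  also have "integral\<^sup>L D (F i) = integral\<^sup>L D g" by (simp add: F_def)
  finally show "(\<integral>\<omega>. g (\<omega> i) \<partial>PiM I (\<lambda>_. D)) = (\<integral>t. g t \<partial>D)" by (simp add: eq)
qed

lemma coord2:
  fixes g h :: "real \<Rightarrow> real"
  assumes "finite I" "i \<in> I" "j \<in> I" "i \<noteq> j" "integrable D g" "integrable D h"
  shows "integrable (PiM I (\<lambda>_. D)) (\<lambda>\<omega>. g (\<omega> i) * h (\<omega> j))"
    "(\<integral>\<omega>. g (\<omega> i) * h (\<omega> j) \<partial>PiM I (\<lambda>_. D)) = (\<integral>t. g t \<partial>D) * (\<integral>t. h t \<partial>D)"
proof -
  define F where "F = (\<lambda>m t. if m = i then g t else if m = j then h t else (1::real))"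
  have [simp]: "integrable D (\<lambda>t. 1::real)" by simp
  have [simp]: "integrable D (\<lambda>t. g t)" "integrable D (\<lambda>t. h t)" using assms by simp_all
  have intF0: "integrable D (F m)" for m
  proof (cases "m = i")
    case True then show ?thesis by (simp add: F_def assms)
  next
    case False
    have "integrable D (\<lambda>t. if b then h t else 1)" for b by (cases b) (simp_all add: assms)
    with False show ?thesis by (simp add: F_def)
  qed
  have intF: "\<And>m. m \<in> I \<Longrightarrow> integrable D (F m)" using intF0 by blast
  have gen: "\<And>G :: _ \<Rightarrow> real. (\<Prod>m\<in>I. G m) = G i * G j * (\<Prod>m\<in>I - {i} - {j}. G m)"
  proof -
    fix G :: "_ \<Rightarrow> real"
    have "(\<Prod>m\<in>I. G m) = G i * (\<Prod>m\<in>I - {i}. G m)"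
      using assms by (simp add: prod.remove)
    also have "(\<Prod>m\<in>I - {i}. G m) = G j * (\<Prod>m\<in>I - {i} - {j}. G m)"
      using assms by (intro prod.remove) auto
    finally show "(\<Prod>m\<in>I. G m) = G i * G j * (\<Prod>m\<in>I - {i} - {j}. G m)" by simp
  qed
  have eq: "\<And>\<omega>. (\<Prod>m\<in>I. F m (\<omega> m)) = g (\<omega> i) * h (\<omega> j)"
    using assms by (subst gen) (simp add: F_def)
  show "integrable (PiM I (\<lambda>_. D)) (\<lambda>\<omega>. g (\<omega> i) * h (\<omega> j))"
    using ps.product_integrable_prod[where f=F, OF assms(1) intF] by (simp add: eq)
  have "(\<integral>\<omega>. (\<Prod>m\<in>I. F m (\<omega> m)) \<partial>PiM I (\<lambda>_. D)) = (\<Prod>m\<in>I. integral\<^sup>L D (F m))"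
    by (rule ps.product_integral_prod[where f=F, OF assms(1) intF])
  also have "\<dots> = integral\<^sup>L D g * integral\<^sup>L D h"
    using assms PD by (subst gen) (simp add: F_def D.prob_space)
  finally show "(\<integral>\<omega>. g (\<omega> i) * h (\<omega> j) \<partial>PiM I (\<lambda>_. D)) = (\<integral>t. g t \<partial>D) * (\<integral>t. h t \<partial>D)" by (simp add: eq)
qed


lemma Y_meas[measurable]:
  fixes f :: "real \<Rightarrow> real"
  assumes "f \<in> borel_measurable borel"
  shows "(\<lambda>\<omega>. \<Sum>j\<in>I. a j * f (\<omega> j)) \<in> borel_measurable (PiM I (\<lambda>_. D))"
proof (rule borel_measurable_sum)
  fix j assume "j \<in> I"
  then have "(\<lambda>\<omega>. f (\<omega> j)) \<in> borel_measurable (PiM I (\<lambda>_. D))"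
    using measurable_compose[OF measurable_component_singleton[where M="\<lambda>_. D" and I=I, OF \<open>j \<in> I\<close>] meas_D[OF assms]] by simp
  then show "(\<lambda>\<omega>. a j * f (\<omega> j)) \<in> borel_measurable (PiM I (\<lambda>_. D))"
    by measurable
qed

lemma bdd_int:
  fixes f :: "real \<Rightarrow> real"
  assumes "f \<in> borel_measurable borel" "\<And>t. \<bar>f t\<bar> \<le> B"
  shows "integrable (PiM I (\<lambda>_. D)) (\<lambda>\<omega>. (\<Sum>j\<in>I. a j * f (\<omega> j)) ^ p)"
proof -
  interpret P: prob_space "PiM I (\<lambda>_. D)" by (rule PPi)
  have b: "\<bar>\<Sum>j\<in>I. a j * f (\<omega> j)\<bar> \<le> (\<Sum>j\<in>I. \<bar>a j\<bar> * B)" for \<omega>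
  proof -
    have "\<bar>\<Sum>j\<in>I. a j * f (\<omega> j)\<bar> \<le> (\<Sum>j\<in>I. \<bar>a j * f (\<omega> j)\<bar>)" by (rule sum_abs)
    also have "\<dots> \<le> (\<Sum>j\<in>I. \<bar>a j\<bar> * B)"
      by (intro sum_mono) (simp add: abs_mult assms(2) mult_left_mono)
    finally show ?thesis .
  qed
  show ?thesis
  proof (rule P.integrable_const_bound)
    show "AE \<omega> in PiM I (\<lambda>_. D). norm ((\<Sum>j\<in>I. a j * f (\<omega> j)) ^ p) \<le> (\<Sum>j\<in>I. \<bar>a j\<bar> * B) ^ p"
      using b by (auto simp: power_abs intro!: power_mono)
    show "(\<lambda>\<omega>. (\<Sum>j\<in>I. a j * f (\<omega> j)) ^ p) \<in> borel_measurable (PiM I (\<lambda>_. D))"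
      using assms(1) by measurable
  qed
qed

lemma poly2:
  fixes f :: "real \<Rightarrow> real"
  assumes "f \<in> borel_measurable borel" "\<And>t. \<bar>f t\<bar> \<le> B" "(\<integral>t. f t \<partial>D) = 0"
  shows "(\<integral>y. (A * f y + c)^2 \<partial>D) = A^2 * (\<integral>t. (f t)^2 \<partial>D) + c^2"
proof -
  have i: "integrable D (\<lambda>t. (f t)^p)" for p
  proof (rule D.integrable_const_bound)
    show "AE t in D. norm ((f t)^p) \<le> B^p" using assms(2)
      by (auto simp: power_abs intro!: power_mono)
    show "(\<lambda>t. (f t)^p) \<in> borel_measurable D" using meas_D[OF assms(1)] by measurable
  qed
  have i1: "integrable D f" using i[of 1] by simp
  have "(\<lambda>y. (A * f y + c)^2) = (\<lambda>y. A^2 * (f y)^2 + (2*A*c) * f y + c^2)"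
    by (auto simp: fun_eq_iff power2_eq_square algebra_simps)
  then show ?thesis using i i1 assms(3)
    by (simp add: integral_add D.prob_space)
qed

lemma poly4:
  fixes f :: "real \<Rightarrow> real"
  assumes "f \<in> borel_measurable borel" "\<And>t. \<bar>f t\<bar> \<le> B" "(\<integral>t. f t \<partial>D) = 0"
    "(\<integral>t. (f t)^3 \<partial>D) = 0"
  shows "(\<integral>y. (A * f y + c)^4 \<partial>D) = A^4 * (\<integral>t. (f t)^4 \<partial>D) + 6*A^2*c^2 * (\<integral>t. (f t)^2 \<partial>D) + c^4"
proof -
  have i: "integrable D (\<lambda>t. (f t)^p)" for p
  proof (rule D.integrable_const_bound)
    show "AE t in D. norm ((f t)^p) \<le> B^p" using assms(2)
      by (auto simp: power_abs intro!: power_mono)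
    show "(\<lambda>t. (f t)^p) \<in> borel_measurable D" using meas_D[OF assms(1)] by measurable
  qed
  have i1: "integrable D f" using i[of 1] by simp
  have "(\<lambda>y. (A * f y + c)^4) = (\<lambda>y. A^4 * (f y)^4 + (4*A^3*c) * (f y)^3 + (6*A^2*c^2) * (f y)^2 + (4*A*c^3) * f y + c^4)"
    by (auto simp: fun_eq_iff power2_eq_square algebra_simps power4_eq_xxxx power3_eq_cube)
  then show ?thesis using i i1 assms(3,4)
    by (simp add: integral_add D.prob_space)
qed

lemma mom4:
  fixes f :: "real \<Rightarrow> real" and a :: "nat \<Rightarrow> real"
  assumes fm: "f \<in> borel_measurable borel" and bd: "\<And>t. \<bar>f t\<bar> \<le> B"
    and e1: "(\<integral>t. f t \<partial>D) = 0" and e3: "(\<integral>t. (f t)^3 \<partial>D) = 0" and fin: "finite I"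
  shows "(\<integral>\<omega>. (\<Sum>j\<in>I. a j * f (\<omega> j))^2 \<partial>PiM I (\<lambda>_. D)) = (\<Sum>j\<in>I. (a j)^2) * (\<integral>t. (f t)^2 \<partial>D) \<and>
    (\<integral>\<omega>. (\<Sum>j\<in>I. a j * f (\<omega> j))^4 \<partial>PiM I (\<lambda>_. D)) \<le>
      3 * (\<Sum>j\<in>I. (a j)^2)^2 * (\<integral>t. (f t)^2 \<partial>D)^2 + (\<integral>t. (f t)^4 \<partial>D) * (\<Sum>j\<in>I. (a j)^4)"
  using fin
proof (induct I)
  case empty show ?case by simp
next
  case (insert k I)
  interpret PI: prob_space "PiM I (\<lambda>_. D)" by (rule PPi)
  define m2 where "m2 = (\<integral>t. (f t)^2 \<partial>D)"
  define m4 where "m4 = (\<integral>t. (f t)^4 \<partial>D)"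
  define Y where "Y x = (\<Sum>j\<in>I. a j * f (x j))" for x
  define s where "s = (\<Sum>j\<in>I. (a j)^2)"
  define q where "q = (\<Sum>j\<in>I. (a j)^4)"
  have m2nn: "m2 \<ge> 0" unfolding m2_def by (rule integral_nonneg_AE) auto
  have m4nn: "m4 \<ge> 0" unfolding m4_def by (rule integral_nonneg_AE) (auto simp: zero_le_even_power)
  have upd: "(\<Sum>j\<in>insert k I. a j * f ((x(k:=y)) j)) = a k * f y + Y x" for x y
  proof -
    have "(\<Sum>j\<in>I. a j * f ((x(k:=y)) j)) = Y x" unfolding Y_def using insert(2) by (intro sum.cong) auto
    then show ?thesis using insert(1,2) by simp
  qed
  have IY: "integrable (PiM I (\<lambda>_. D)) (\<lambda>x. (Y x)^p)" for p
    unfolding Y_def by (rule bdd_int[OF fm bd])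
  have "(\<integral>\<omega>. (\<Sum>j\<in>insert k I. a j * f (\<omega> j))^2 \<partial>PiM (insert k I) (\<lambda>_. D))
     = (\<integral>x. (\<integral>y. (\<Sum>j\<in>insert k I. a j * f ((x(k:=y)) j))^2 \<partial>D) \<partial>PiM I (\<lambda>_. D))"
    by (rule ps.product_integral_insert[OF insert(1,2) bdd_int[OF fm bd]])
  also have "\<dots> = (\<integral>x. (a k)^2 * m2 + (Y x)^2 \<partial>PiM I (\<lambda>_. D))"
    by (rule Bochner_Integration.integral_cong[OF refl]) (simp only: upd, simp add: poly2[OF fm bd e1] m2_def)
  also have "\<dots> = (a k)^2 * m2 + (\<integral>x. (Y x)^2 \<partial>PiM I (\<lambda>_. D))"
    using IY[of 2] by (simp add: integral_add PI.prob_space)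
  finally have E2: "(\<integral>\<omega>. (\<Sum>j\<in>insert k I. a j * f (\<omega> j))^2 \<partial>PiM (insert k I) (\<lambda>_. D))
     = (a k)^2 * m2 + (\<integral>x. (Y x)^2 \<partial>PiM I (\<lambda>_. D))" .
  have "(\<integral>\<omega>. (\<Sum>j\<in>insert k I. a j * f (\<omega> j))^4 \<partial>PiM (insert k I) (\<lambda>_. D))
     = (\<integral>x. (\<integral>y. (\<Sum>j\<in>insert k I. a j * f ((x(k:=y)) j))^4 \<partial>D) \<partial>PiM I (\<lambda>_. D))"
    by (rule ps.product_integral_insert[OF insert(1,2) bdd_int[OF fm bd]])
  also have "\<dots> = (\<integral>x. (a k)^4 * m4 + (6 * (a k)^2 * m2) * (Y x)^2 + (Y x)^4 \<partial>PiM I (\<lambda>_. D))"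
    by (rule Bochner_Integration.integral_cong[OF refl]) (simp only: upd poly4[OF fm bd e1 e3], simp add: m2_def m4_def algebra_simps)
  also have "\<dots> = (a k)^4 * m4 + (6 * (a k)^2 * m2) * (\<integral>x. (Y x)^2 \<partial>PiM I (\<lambda>_. D)) + (\<integral>x. (Y x)^4 \<partial>PiM I (\<lambda>_. D))"
    using IY[of 2] IY[of 4] by (simp add: integral_add PI.prob_space)
  finally have E4: "(\<integral>\<omega>. (\<Sum>j\<in>insert k I. a j * f (\<omega> j))^4 \<partial>PiM (insert k I) (\<lambda>_. D))
     = (a k)^4 * m4 + (6 * (a k)^2 * m2) * (\<integral>x. (Y x)^2 \<partial>PiM I (\<lambda>_. D)) + (\<integral>x. (Y x)^4 \<partial>PiM I (\<lambda>_. D))" .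
  have IH2: "(\<integral>x. (Y x)^2 \<partial>PiM I (\<lambda>_. D)) = s * m2" and
       IH4: "(\<integral>x. (Y x)^4 \<partial>PiM I (\<lambda>_. D)) \<le> 3 * s^2 * m2^2 + m4 * q"
    using insert(3) unfolding Y_def s_def q_def m2_def m4_def by auto
  have ss: "(\<Sum>j\<in>insert k I. (a j)^2) = (a k)^2 + s" "(\<Sum>j\<in>insert k I. (a j)^4) = (a k)^4 + q"
    using insert(1,2) by (simp_all add: s_def q_def)
  have key: "(a k)^4 * m4 + (6 * (a k)^2 * m2) * (s * m2) + (3 * s^2 * m2^2 + m4 * q)
        \<le> 3 * ((a k)^2 + s)^2 * m2^2 + m4 * ((a k)^4 + q)"
  proof -
    have "0 \<le> 3 * (a k)^4 * m2^2" by simp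
    then show ?thesis by (simp add: power2_eq_square power4_eq_xxxx algebra_simps)
  qed
  have c1: "(\<integral>\<omega>. (\<Sum>j\<in>insert k I. a j * f (\<omega> j))^2 \<partial>PiM (insert k I) (\<lambda>_. D)) = (\<Sum>j\<in>insert k I. (a j)^2) * m2"
    unfolding E2 IH2 ss by (simp add: algebra_simps)
  have c2: "(\<integral>\<omega>. (\<Sum>j\<in>insert k I. a j * f (\<omega> j))^4 \<partial>PiM (insert k I) (\<lambda>_. D))
      \<le> 3 * (\<Sum>j\<in>insert k I. (a j)^2)^2 * m2^2 + m4 * (\<Sum>j\<in>insert k I. (a j)^4)"
    unfolding E4 IH2 ss using IH4 key by linarith
  show ?case using c1 c2 unfolding m2_def m4_def by simp
qed

lemma mom2:
  fixes f :: "real \<Rightarrow> real" and a :: "nat \<Rightarrow> real"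
  assumes fin: "finite I" and i1: "integrable D f" and i2: "integrable D (\<lambda>t. (f t)^2)"
    and e1: "(\<integral>t. f t \<partial>D) = 0"
  shows "integrable (PiM I (\<lambda>_. D)) (\<lambda>\<omega>. (\<Sum>j\<in>I. a j * f (\<omega> j))^2)"
    "(\<integral>\<omega>. (\<Sum>j\<in>I. a j * f (\<omega> j))^2 \<partial>PiM I (\<lambda>_. D)) = (\<Sum>j\<in>I. (a j)^2) * (\<integral>t. (f t)^2 \<partial>D)"
proof -
  define m2 where "m2 = (\<integral>t. (f t)^2 \<partial>D)"
  have sq: "(\<lambda>\<omega>. (\<Sum>j\<in>I. a j * f (\<omega> j))^2) = (\<lambda>\<omega>. \<Sum>i\<in>I. \<Sum>j\<in>I. (a i * a j) * (f (\<omega> i) * f (\<omega> j)))"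
    by (simp add: fun_eq_iff power2_eq_square sum_product mult_ac)
  have ij: "integrable (PiM I (\<lambda>_. D)) (\<lambda>\<omega>. f (\<omega> i) * f (\<omega> j)) \<and>
     (\<integral>\<omega>. f (\<omega> i) * f (\<omega> j) \<partial>PiM I (\<lambda>_. D)) = (if i = j then m2 else 0)"
    if "i \<in> I" "j \<in> I" for i j
  proof (cases "i = j")
    case True
    have e: "(\<lambda>\<omega>. f (\<omega> i) * f (\<omega> j)) = (\<lambda>\<omega>. (\<lambda>t. (f t)^2) (\<omega> i))"
      using True by (simp add: fun_eq_iff power2_eq_square)
    show ?thesis unfolding e using coord1[OF fin that(1) i2] True by (simp add: m2_def)
  next
    case False
    show ?thesis using coord2[OF fin that False i1 i1] False e1 by simp
  qed
  have ijI: "\<And>i j. i \<in> I \<Longrightarrow> j \<in> I \<Longrightarrow> integrable (PiM I (\<lambda>_. D)) (\<lambda>\<omega>. f (\<omega> i) * f (\<omega> j))"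
    using ij by blast
  have ijE: "\<And>i j. i \<in> I \<Longrightarrow> j \<in> I \<Longrightarrow> (\<integral>\<omega>. f (\<omega> i) * f (\<omega> j) \<partial>PiM I (\<lambda>_. D)) = (if i = j then m2 else 0)"
    using ij by blast
  show "integrable (PiM I (\<lambda>_. D)) (\<lambda>\<omega>. (\<Sum>j\<in>I. a j * f (\<omega> j))^2)"
    unfolding sq using ijI by (auto intro!: integrable_sum integrable_mult_right)
  have "(\<integral>\<omega>. (\<Sum>j\<in>I. a j * f (\<omega> j))^2 \<partial>PiM I (\<lambda>_. D))
      = (\<Sum>i\<in>I. \<Sum>j\<in>I. (a i * a j) * (\<integral>\<omega>. f (\<omega> i) * f (\<omega> j) \<partial>PiM I (\<lambda>_. D)))"
    unfolding sq using ijI by (simp add: integral_sum integrable_sum)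
  also have "\<dots> = (\<Sum>i\<in>I. \<Sum>j\<in>I. (if i = j then (a i)^2 * m2 else 0))"
    using ijE by (intro sum.cong refl) (simp add: power2_eq_square)
  also have "\<dots> = (\<Sum>i\<in>I. (a i)^2 * m2)"
    using fin by (simp add: sum.delta)
  finally show "(\<integral>\<omega>. (\<Sum>j\<in>I. a j * f (\<omega> j))^2 \<partial>PiM I (\<lambda>_. D)) = (\<Sum>j\<in>I. (a j)^2) * (\<integral>t. (f t)^2 \<partial>D)"
    by (simp add: sum_distrib_right m2_def)
qed

lemma odd_int:
  fixes g :: "real \<Rightarrow> real"
  assumes sy: "distr D borel uminus = D" and gm: "g \<in> borel_measurable borel" and odd: "\<And>t. g (-t) = - g t"
  shows "(\<integral>t. g t \<partial>D) = 0"
proof -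
  have um: "uminus \<in> measurable D borel" using meas_D by simp
  have "(\<integral>t. g t \<partial>D) = (\<integral>t. g t \<partial>distr D borel uminus)" using sy by simp
  also have "\<dots> = (\<integral>t. g (- t) \<partial>D)" by (rule integral_distr[OF um gm])
  also have "\<dots> = - (\<integral>t. g t \<partial>D)" by (simp add: odd)
  finally show ?thesis by simp
qed

end

theorem lemma4p4:
  shows "\<exists>c::real. c > 0 \<and>
    (\<forall>(D::real measure) (n::nat) (x::nat \<Rightarrow> real).
       prob_space D \<longrightarrow> sets D = sets borel \<longrightarrow>
       symmetric_distr D \<longrightarrow> subgaussian D \<longrightarrow>
       (\<integral>t. t\<^sup>2 \<partial>D) = 1 \<longrightarrow>
       (\<Sum>i<n. (x i)\<^sup>2) = 1 \<longrightarrow>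
       (\<forall>i<n. \<bar>x i\<bar> \<le> c / (\<integral>t. \<bar>t\<bar> ^ 3 \<partial>D)) \<longrightarrow>
       (let v = (\<lambda>i. \<integral>\<omega>. sign0 (\<Sum>j<n. \<omega> j * x j) * \<omega> i \<partial>(PiM {..<n} (\<lambda>_. D)))
        in 1/2 \<le> sqrt (\<Sum>i<n. (v i)\<^sup>2) \<and> sqrt (\<Sum>i<n. (v i)\<^sup>2) \<le> 1))"
proof (intro exI[of _ "1/1600"] conjI allI impI)
  show "(0::real) < 1/1600" by simp
  fix D :: "real measure" and n :: nat and x :: "nat \<Rightarrow> real"
  assume hPD: "prob_space D" and hsD: "sets D = sets borel" and hsym: "symmetric_distr D"
    and hsg: "subgaussian D" and hm2: "(\<integral>t. t\<^sup>2 \<partial>D) = 1"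
    and xs: "(\<Sum>i<n. (x i)\<^sup>2) = 1"
    and xb0: "\<forall>i<n. \<bar>x i\<bar> \<le> 1/1600 / (\<integral>t. \<bar>t\<bar> ^ 3 \<partial>D)"
  interpret setD D using hPD hsD by (rule setD.intro)
  interpret Dp: prob_space D by (rule hPD)
  define c :: real where "c = 1/1600"
  define m3 where "m3 = (\<integral>t. \<bar>t\<bar> ^ 3 \<partial>D)"
  have xb: "\<And>i. i < n \<Longrightarrow> \<bar>x i\<bar> \<le> c / m3" using xb0 by (simp add: c_def m3_def)
  have m3nn: "m3 \<ge> 0" unfolding m3_def by (rule integral_nonneg_AE) auto
  have m3pos: "m3 > 0"
  proof (rule ccontr)
    assume "\<not> m3 > 0"
    then have "m3 = 0" using m3nn by simp
    then have "\<And>i. i < n \<Longrightarrow> \<bar>x i\<bar> \<le> 0" using xb by simp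
    then have "\<And>i. i < n \<Longrightarrow> x i = 0" by (meson abs_le_zero_iff)
    then have "(\<Sum>i<n. (x i)\<^sup>2) = 0" by simp
    then show False using xs by simp
  qed
  have int3: "integrable D (\<lambda>t. \<bar>t\<bar> ^ 3)"
  proof (rule ccontr)
    assume "\<not> integrable D (\<lambda>t. \<bar>t\<bar> ^ 3)"
    then have "m3 = 0" unfolding m3_def by (rule not_integrable_integral_eq)
    with m3pos show False by simp
  qed
  have int2: "integrable D (\<lambda>t. t\<^sup>2)"
  proof (rule ccontr)
    assume "\<not> integrable D (\<lambda>t. t\<^sup>2)"
    then have "(\<integral>t. t\<^sup>2 \<partial>D) = 0" by (rule not_integrable_integral_eq)
    with hm2 show False by simp
  qed
  have int1: "integrable D (\<lambda>t. t)"
  proof (rule Bochner_Integration.integrable_bound)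
    show "integrable D (\<lambda>t. 1 + t\<^sup>2)" using int2 by (intro Bochner_Integration.integrable_add) auto
    show "(\<lambda>t. t) \<in> borel_measurable D" by simp
    show "AE t in D. norm t \<le> norm (1 + t\<^sup>2)"
    proof (rule AE_I2)
      fix t :: real
      have "0 \<le> (\<bar>t\<bar> - 1)\<^sup>2" by simp
      also have "(\<bar>t\<bar> - 1)\<^sup>2 = t\<^sup>2 - 2 * \<bar>t\<bar> + 1" by (simp add: power2_diff)
      finally have "\<bar>t\<bar> \<le> 1 + t\<^sup>2" by linarith
      then show "norm t \<le> norm (1 + t\<^sup>2)" by simp
    qed
  qed
  have sy: "distr D borel uminus = D" using hsym by (simp add: symmetric_distr_def)
  define M where "M = m3 / c"
  have Mpos: "M > 0" using m3pos by (simp add: M_def c_def)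
  define tau where "tau t = (if \<bar>t\<bar> \<le> M then t else 0)" for t :: real
  define rho where "rho t = (if \<bar>t\<bar> \<le> M then 0 else t)" for t :: real
  have tau_m[measurable]: "tau \<in> borel_measurable borel" unfolding tau_def by measurable
  have rho_m[measurable]: "rho \<in> borel_measurable borel" unfolding rho_def by measurable
  have tau_b: "\<bar>tau t\<bar> \<le> M" for t using Mpos by (simp add: tau_def)
  have tr: "tau t + rho t = t" for t by (simp add: tau_def rho_def)
  have tau1: "(\<integral>t. tau t \<partial>D) = 0" by (rule odd_int[OF sy]) (auto simp: tau_def)
  have tau3: "(\<integral>t. (tau t)^3 \<partial>D) = 0" by (rule odd_int[OF sy]) (auto simp: tau_def)
  have rho1: "(\<integral>t. rho t \<partial>D) = 0" by (rule odd_int[OF sy]) (auto simp: rho_def)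
  have tau_int: "integrable D (\<lambda>t. (tau t)^p)" for p
  proof (rule Dp.integrable_const_bound)
    show "AE t in D. norm ((tau t)^p) \<le> M^p" using tau_b
      by (auto simp: power_abs intro!: power_mono)
    show "(\<lambda>t. (tau t)^p) \<in> borel_measurable D" by measurable
  qed
  have rho2_int: "integrable D (\<lambda>t. (rho t)^2)"
  proof (rule Bochner_Integration.integrable_bound[OF int2])
    show "(\<lambda>t. (rho t)^2) \<in> borel_measurable D" by measurable
    show "AE t in D. norm ((rho t)^2) \<le> norm (t^2)" by (auto simp: rho_def)
  qed
  have rho_int: "integrable D rho"
  proof (rule Bochner_Integration.integrable_bound[OF int1])
    show "rho \<in> borel_measurable D" by measurable
    show "AE t in D. norm (rho t) \<le> norm t" by (auto simp: rho_def)
  qed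
  have rho2_le: "(\<integral>t. (rho t)^2 \<partial>D) \<le> c"
  proof -
    have "(\<integral>t. (rho t)^2 \<partial>D) \<le> (\<integral>t. \<bar>t\<bar>^3 / M \<partial>D)"
    proof (rule integral_mono[OF rho2_int])
      show "integrable D (\<lambda>t. \<bar>t\<bar>^3 / M)" using int3 by simp
      fix t :: real
      show "(rho t)^2 \<le> \<bar>t\<bar>^3 / M"
      proof (cases "\<bar>t\<bar> \<le> M")
        case True then show ?thesis using Mpos by (simp add: rho_def)
      next
        case False
        then have "M * \<bar>t\<bar>^2 \<le> \<bar>t\<bar> * \<bar>t\<bar>^2" by (intro mult_right_mono) auto
        then have "M * t^2 \<le> \<bar>t\<bar>^3" by (simp add: power2_abs power3_eq_cube power2_eq_square mult_ac)
        then show ?thesis using False Mpos by (simp add: rho_def field_simps)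
      qed
    qed
    also have "\<dots> = m3 / M" by (simp add: m3_def)
    also have "\<dots> = c" using m3pos by (simp add: M_def c_def)
    finally show ?thesis .
  qed
  have rho2_nn: "(\<integral>t. (rho t)^2 \<partial>D) \<ge> 0" by (rule integral_nonneg_AE) auto
  have tau2_eq: "(\<integral>t. (tau t)^2 \<partial>D) = 1 - (\<integral>t. (rho t)^2 \<partial>D)"
  proof -
    have "(\<lambda>t. (tau t)^2) = (\<lambda>t. t^2 - (rho t)^2)" by (auto simp: fun_eq_iff tau_def rho_def)
    then show ?thesis using int2 rho2_int hm2 by simp
  qed
  have tau4_le: "(\<integral>t. (tau t)^4 \<partial>D) \<le> M * m3"
  proof -
    have "(\<integral>t. (tau t)^4 \<partial>D) \<le> (\<integral>t. M * \<bar>t\<bar>^3 \<partial>D)"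
    proof (rule integral_mono[OF tau_int])
      show "integrable D (\<lambda>t. M * \<bar>t\<bar>^3)" using int3 by simp
      fix t :: real
      show "(tau t)^4 \<le> M * \<bar>t\<bar>^3"
      proof (cases "\<bar>t\<bar> \<le> M")
        case True
        then have "\<bar>t\<bar> * \<bar>t\<bar>^3 \<le> M * \<bar>t\<bar>^3" by (intro mult_right_mono) auto
        then show ?thesis using True by (simp add: tau_def power4_eq_xxxx power3_eq_cube abs_mult_self_eq mult_ac)
      next
        case False then show ?thesis using Mpos by (simp add: tau_def)
      qed
    qed
    also have "\<dots> = M * m3" by (simp add: m3_def)
    finally show ?thesis .
  qed
  have tau4_nn: "(\<integral>t. (tau t)^4 \<partial>D) \<ge> 0" by (rule integral_nonneg_AE) (auto simp: zero_le_even_power)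
  define P where "P = PiM {..<n} (\<lambda>_. D)"
  interpret P: prob_space P unfolding P_def by (rule PPi)
  define m2t where "m2t = (\<integral>t. (tau t)^2 \<partial>D)"
  define m4t where "m4t = (\<integral>t. (tau t)^4 \<partial>D)"
  define T where "T \<omega> = (\<Sum>j<n. x j * tau (\<omega> j))" for \<omega>
  define R where "R \<omega> = (\<Sum>j<n. x j * rho (\<omega> j))" for \<omega>
  define S where "S \<omega> = (\<Sum>j<n. \<omega> j * x j)" for \<omega>
  have STR: "S \<omega> = T \<omega> + R \<omega>" for \<omega>
  proof -
    have "S \<omega> = (\<Sum>j<n. x j * (tau (\<omega> j) + rho (\<omega> j)))" unfolding S_def tr by (simp add: mult.commute)
    then show ?thesis unfolding T_def R_def by (simp add: distrib_left sum.distrib)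
  qed
  have m4r: "(\<integral>\<omega>. (T \<omega>)^2 \<partial>P) = (\<Sum>j<n. (x j)^2) * m2t \<and>
    (\<integral>\<omega>. (T \<omega>)^4 \<partial>P) \<le> 3 * (\<Sum>j<n. (x j)^2)^2 * m2t^2 + m4t * (\<Sum>j<n. (x j)^4)"
    unfolding T_def P_def m2t_def m4t_def by (rule mom4[OF tau_m tau_b tau1 tau3]) simp
  have ET2: "(\<integral>\<omega>. (T \<omega>)^2 \<partial>P) \<ge> 1 - c" using m4r rho2_le
    by (simp add: xs m2t_def tau2_eq)
  have x4: "(\<Sum>j<n. (x j)^4) \<le> (c/m3)^2"
  proof -
    have "(\<Sum>j<n. (x j)^4) \<le> (\<Sum>j<n. (c/m3)^2 * (x j)^2)"
    proof (rule sum_mono)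
      fix j assume "j \<in> {..<n}"
      then have "\<bar>x j\<bar> \<le> c/m3" using xb by simp
      then have "(x j)^2 \<le> (c/m3)^2" by (metis abs_ge_zero power2_abs power_mono)
      then have "(x j)^2 * (x j)^2 \<le> (c/m3)^2 * (x j)^2" by (intro mult_right_mono) auto
      then show "(x j)^4 \<le> (c/m3)^2 * (x j)^2" by (simp add: power4_eq_xxxx power2_eq_square mult_ac)
    qed
    also have "\<dots> = (c/m3)^2" by (simp add: sum_distrib_left[symmetric] xs)
    finally show ?thesis .
  qed
  have ET4: "(\<integral>\<omega>. (T \<omega>)^4 \<partial>P) \<le> 3 + c"
  proof -
    have a2: "m2t \<ge> 0" unfolding m2t_def by (rule integral_nonneg_AE) auto
    have a: "m2t \<le> 1" "m2t \<ge> 0" using tau2_eq rho2_nn a2 by (auto simp: m2t_def)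
    have "m2t^2 \<le> 1" using a by (simp add: power_le_one)
    moreover have "m4t * (\<Sum>j<n. (x j)^4) \<le> (M * m3) * (c/m3)^2"
      using tau4_le tau4_nn x4 Mpos m3pos unfolding m4t_def
      by (intro mult_mono) (auto intro: sum_nonneg)
    moreover have "(M * m3) * (c/m3)^2 = c" using m3pos by (simp add: M_def c_def power2_eq_square)
    ultimately show ?thesis using m4r xs by simp
  qed
  have mR: "integrable P (\<lambda>\<omega>. (R \<omega>)^2) \<and> (\<integral>\<omega>. (R \<omega>)^2 \<partial>P) = (\<Sum>j<n. (x j)^2) * (\<integral>t. (rho t)^2 \<partial>D)"
    unfolding R_def P_def using mom2[OF _ rho_int rho2_int rho1, of "{..<n}" x] by simp
  have ER2: "(\<integral>\<omega>. (R \<omega>)^2 \<partial>P) \<le> c" using mR rho2_le xs by simp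
  have mS: "integrable P (\<lambda>\<omega>. (S \<omega>)^2)"
  proof -
    have "integrable P (\<lambda>\<omega>. (\<Sum>j<n. x j * (\<lambda>t. t) (\<omega> j))^2)"
      unfolding P_def using mom2(1)[OF _ int1 int2 odd_int[OF sy], of "{..<n}" x] by simp
    then show ?thesis unfolding S_def by (simp add: mult.commute)
  qed
  have IT: "integrable P (\<lambda>\<omega>. (T \<omega>)^p)" for p
    unfolding T_def P_def by (rule bdd_int[OF tau_m tau_b])
  have Smeas: "S \<in> borel_measurable P"
  proof -
    have "(\<lambda>\<omega>. \<Sum>j\<in>{..<n}. x j * (\<lambda>t. t) (\<omega> j)) \<in> borel_measurable P"
      unfolding P_def by (rule Y_meas) simp
    then show ?thesis unfolding S_def by (simp add: mult.commute)
  qed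
  have intS: "integrable P (\<lambda>\<omega>. \<bar>S \<omega>\<bar>)"
  proof (rule Bochner_Integration.integrable_bound)
    show "integrable P (\<lambda>\<omega>. 1 + (S \<omega>)\<^sup>2)" using mS by (intro Bochner_Integration.integrable_add) auto
    show "(\<lambda>\<omega>. \<bar>S \<omega>\<bar>) \<in> borel_measurable P" using Smeas by measurable
    show "AE \<omega> in P. norm \<bar>S \<omega>\<bar> \<le> norm (1 + (S \<omega>)\<^sup>2)"
    proof (rule AE_I2)
      fix \<omega> show "norm \<bar>S \<omega>\<bar> \<le> norm (1 + (S \<omega>)\<^sup>2)"
        using pw4[of "S \<omega>"] by (simp add: abs_of_nonneg add_nonneg_nonneg)
    qed
  qed
  have ES: "(\<integral>\<omega>. \<bar>S \<omega>\<bar> \<partial>P) \<ge> 11/20"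
  proof -
    have intg: "integrable P (\<lambda>\<omega>. (6/7)*(T \<omega>)^2 - (32/343)*(T \<omega>)^4 - 20*(R \<omega>)^2 - 1/80)"
      using IT[of 2] IT[of 4] mR
      by (intro Bochner_Integration.integrable_diff Bochner_Integration.integrable_mult_right P.integrable_const) auto
    have "(\<integral>\<omega>. (6/7)*(T \<omega>)^2 - (32/343)*(T \<omega>)^4 - 20*(R \<omega>)^2 - 1/80 \<partial>P)
       = (6/7)*(\<integral>\<omega>. (T \<omega>)^2 \<partial>P) - (32/343)*(\<integral>\<omega>. (T \<omega>)^4 \<partial>P) - 20*(\<integral>\<omega>. (R \<omega>)^2 \<partial>P) - 1/80"
      using IT mR by (simp add: P.prob_space)
    also have "\<dots> \<ge> 11/20" using ET2 ET4 ER2 by (simp add: c_def)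
    finally have "(\<integral>\<omega>. (6/7)*(T \<omega>)^2 - (32/343)*(T \<omega>)^4 - 20*(R \<omega>)^2 - 1/80 \<partial>P) \<ge> 11/20" .
    moreover have "(\<integral>\<omega>. (6/7)*(T \<omega>)^2 - (32/343)*(T \<omega>)^4 - 20*(R \<omega>)^2 - 1/80 \<partial>P) \<le> (\<integral>\<omega>. \<bar>S \<omega>\<bar> \<partial>P)"
      by (rule integral_mono[OF intg intS]) (unfold STR, rule pw3)
    ultimately show ?thesis by linarith
  qed
  define v where "v i = (\<integral>\<omega>. sign0 (S \<omega>) * \<omega> i \<partial>P)" for i
  have ci: "integrable P (\<lambda>\<omega>. \<omega> i)" if "i < n" for i
    using coord1(1)[of "{..<n}" i "\<lambda>t. t"] that int1 by (simp add: P_def)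
  have sgm: "(\<lambda>\<omega>. sign0 (S \<omega>)) \<in> borel_measurable P"
    using measurable_compose[OF Smeas sign0_measurable] .
  have isv: "integrable P (\<lambda>\<omega>. sign0 (S \<omega>) * \<omega> i)" if "i < n" for i
  proof (rule Bochner_Integration.integrable_bound[OF ci[OF that]])
    show "(\<lambda>\<omega>. sign0 (S \<omega>) * \<omega> i) \<in> borel_measurable P"
      using borel_measurable_times[OF sgm borel_measurable_integrable[OF ci[OF that]]] .
    show "AE \<omega> in P. norm (sign0 (S \<omega>) * \<omega> i) \<le> norm (\<omega> i)"
      by (rule AE_I2) (simp add: abs_mult sign0_abs)
  qed
  have lin: "(\<Sum>i<n. v i * a i) = (\<integral>\<omega>. sign0 (S \<omega>) * (\<Sum>i<n. a i * \<omega> i) \<partial>P)" for a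
  proof -
    have "(\<Sum>i<n. v i * a i) = (\<Sum>i<n. (\<integral>\<omega>. sign0 (S \<omega>) * \<omega> i * a i \<partial>P))"
      by (simp add: v_def)
    also have "\<dots> = (\<integral>\<omega>. (\<Sum>i<n. sign0 (S \<omega>) * \<omega> i * a i) \<partial>P)"
      using isv by (subst Bochner_Integration.integral_sum) auto
    also have "\<dots> = (\<integral>\<omega>. sign0 (S \<omega>) * (\<Sum>i<n. a i * \<omega> i) \<partial>P)"
      by (simp add: sum_distrib_left mult_ac)
    finally show ?thesis .
  qed
  have vx: "(\<Sum>i<n. v i * x i) = (\<integral>\<omega>. \<bar>S \<omega>\<bar> \<partial>P)"
  proof -
    have e: "(\<Sum>i<n. x i * \<omega> i) = S \<omega>" for \<omega> by (simp add: S_def mult.commute)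
    show ?thesis unfolding lin e by (simp add: sign0_abs)
  qed
  define Z where "Z \<omega> = (\<Sum>i<n. v i * \<omega> i)" for \<omega>
  have mZ: "integrable P (\<lambda>\<omega>. (Z \<omega>)^2) \<and> (\<integral>\<omega>. (Z \<omega>)^2 \<partial>P) = (\<Sum>i<n. (v i)^2)"
  proof -
    have "integrable P (\<lambda>\<omega>. (\<Sum>j\<in>{..<n}. v j * (\<lambda>t. t) (\<omega> j))^2) \<and>
      (\<integral>\<omega>. (\<Sum>j\<in>{..<n}. v j * (\<lambda>t. t) (\<omega> j))^2 \<partial>P) = (\<Sum>j\<in>{..<n}. (v j)^2) * (\<integral>t. ((\<lambda>t. t) t)^2 \<partial>D)"
      unfolding P_def using mom2[OF _ int1 int2 odd_int[OF sy], of "{..<n}" v] by simp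
    then show ?thesis unfolding Z_def using hm2 by simp
  qed
  have Zmeas: "Z \<in> borel_measurable P"
    unfolding Z_def P_def using Y_meas[where f="\<lambda>t. t" and I="{..<n}" and a=v] by simp
  have intZ: "integrable P (\<lambda>\<omega>. \<bar>Z \<omega>\<bar>)"
  proof (rule Bochner_Integration.integrable_bound)
    show "integrable P (\<lambda>\<omega>. 1 + (Z \<omega>)\<^sup>2)" using mZ by (intro Bochner_Integration.integrable_add) auto
    show "(\<lambda>\<omega>. \<bar>Z \<omega>\<bar>) \<in> borel_measurable P" using Zmeas by measurable
    show "AE \<omega> in P. norm \<bar>Z \<omega>\<bar> \<le> norm (1 + (Z \<omega>)\<^sup>2)"
    proof (rule AE_I2)
      fix \<omega> show "norm \<bar>Z \<omega>\<bar> \<le> norm (1 + (Z \<omega>)\<^sup>2)"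
        using pw4[of "Z \<omega>"] by (simp add: abs_of_nonneg add_nonneg_nonneg)
    qed
  qed
  have intsZ: "integrable P (\<lambda>\<omega>. sign0 (S \<omega>) * Z \<omega>)"
  proof (rule Bochner_Integration.integrable_bound[OF intZ])
    show "(\<lambda>\<omega>. sign0 (S \<omega>) * Z \<omega>) \<in> borel_measurable P"
      using borel_measurable_times[OF sgm Zmeas] .
    show "AE \<omega> in P. norm (sign0 (S \<omega>) * Z \<omega>) \<le> norm \<bar>Z \<omega>\<bar>"
      by (rule AE_I2) (simp add: abs_mult sign0_abs)
  qed
  have vv: "(\<Sum>i<n. (v i)^2) \<le> (\<integral>\<omega>. \<bar>Z \<omega>\<bar> \<partial>P)"
  proof -
    have "(\<Sum>i<n. (v i)^2) = (\<Sum>i<n. v i * v i)" by (simp add: power2_eq_square)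
    also have "\<dots> = (\<integral>\<omega>. sign0 (S \<omega>) * Z \<omega> \<partial>P)" unfolding lin Z_def ..
    also have "\<dots> \<le> (\<integral>\<omega>. \<bar>Z \<omega>\<bar> \<partial>P)"
      by (rule integral_mono[OF intsZ intZ]) (simp add: sign0_abs)
    finally show ?thesis .
  qed
  define L where "L = sqrt (\<Sum>i<n. (v i)^2)"
  have L0: "L \<ge> 0" unfolding L_def by (intro real_sqrt_ge_zero sum_nonneg) auto
  have LL: "L^2 = (\<Sum>i<n. (v i)^2)" unfolding L_def by (intro real_sqrt_pow2 sum_nonneg) auto
  have up: "L \<le> 1"
  proof (cases "L = 0")
    case False
    then have Lp: "L > 0" using L0 by simp
    have "(\<integral>\<omega>. \<bar>Z \<omega>\<bar> \<partial>P) \<le> (\<integral>\<omega>. (Z \<omega>)^2/(2*L) + L/2 \<partial>P)"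
    proof (rule integral_mono[OF intZ])
      show "integrable P (\<lambda>\<omega>. (Z \<omega>)^2/(2*L) + L/2)" using mZ
        by (intro Bochner_Integration.integrable_add Bochner_Integration.integrable_divide P.integrable_const) auto
      fix \<omega> show "\<bar>Z \<omega>\<bar> \<le> (Z \<omega>)^2/(2*L) + L/2"
        using amgm[OF Lp, of "\<bar>Z \<omega>\<bar>" 1] by simp
    qed
    also have "\<dots> = (\<Sum>i<n. (v i)^2)/(2*L) + L/2" using mZ by (simp add: P.prob_space)
    also have "\<dots> = L" using Lp unfolding LL[symmetric] by (simp add: field_simps power2_eq_square)
    finally have "L^2 \<le> L" using vv LL by simp
    then show ?thesis using Lp by (simp add: power2_eq_square)
  qed simp
  have low: "1/2 \<le> L"
  proof (cases "L = 0")
    case True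
    then have "\<And>i. i < n \<Longrightarrow> v i = 0" using LL by (simp add: sum_nonneg_eq_0_iff)
    then have "(\<Sum>i<n. v i * x i) = 0" by simp
    then show ?thesis using vx ES by simp
  next
    case False
    then have Lp: "L > 0" using L0 by simp
    have "(\<Sum>i<n. v i * x i) \<le> (\<Sum>i<n. (v i)^2/(2*L) + L*(x i)^2/2)"
      by (intro sum_mono amgm[OF Lp])
    also have "\<dots> = L^2/(2*L) + L/2" unfolding LL
      by (simp add: sum.distrib sum_divide_distrib[symmetric] sum_distrib_left[symmetric] xs)
    also have "\<dots> = L" using Lp by (simp add: power2_eq_square)
    finally show ?thesis using vx ES by simp
  qed
  show "let v = (\<lambda>i. \<integral>\<omega>. sign0 (\<Sum>j<n. \<omega> j * x j) * \<omega> i \<partial>(PiM {..<n} (\<lambda>_. D)))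
        in 1/2 \<le> sqrt (\<Sum>i<n. (v i)\<^sup>2) \<and> sqrt (\<Sum>i<n. (v i)\<^sup>2) \<le> 1"
    using up low unfolding L_def v_def S_def P_def Let_def by simp
qed

end
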